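(* Let $\Theta$ be a space of input histories satisfying the free-choice condition and let $\hat\Theta\in\mathrm{CC}(\Theta)$ be a causal completion of $\Theta$. Then $E^{\hat\Theta}=E^\Theta$ and $I^{\hat\Theta}_\omega=I^\Theta_\omega$ for all $\omega\in E^\Theta$.
   Context: A partial function is a function $f$ with domain $\mathrm{dom}(f)$ a subset of an index set, values in given sets; ordered by restriction. Compatible = agreeing on common domain; a compatible set $\mathcal F$ has join $\bigvee\mathcal F$ (union). $\Theta$ is $\vee$-prime if for compatible $\mathcal F\subseteq\Theta$ with $\bigvee\mathcal F\in\Theta$ we have $\bigvee\mathcal F\in\mathcal F$. A space of input histories is a finite $\vee$-prime set of partial functions; $E^\Theta=\bigcup_{h\in\Theta}\mathrm{dom}(h)$, $I^\Theta_\omega=\{h(\omega):h\in\Theta,\omega\in\mathrm{dom}(h)\}$, $\mathrm{Ext}(\Theta)=\{\bigvee\mathcal F:\emptyset\ne\mathcal F\subseteq\Theta\text{ compatible}\}$. Free-choice: maximal elements of $\mathrm{Ext}(\Theta)$ are exactly the total functions in $\prod_{\omega\in E^\Theta}I^\Theta_\omega$. $\mathrm{tips}_\Theta(h)=\mathrm{dom}(h)\setminus\bigcup\{\mathrm{dom}(k):k\in\mathrm{Ext}(\Theta),k<h\}$. Causally complete: free-choice and $|\mathrm{tips}_\Theta(h)|=1$ for all $h\in\Theta$. Spaces are ordered by $\Theta_1\le\Theta_2$ iff $\mathrm{Ext}(\Theta_1)\supseteq\mathrm{Ext}(\Theta_2)$. The causal completions $\mathrm{CC}(\Theta)$ are the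 maximal elements of $\{\Theta_1\le\Theta:\Theta_1\text{ causally complete}\}$. *)

theory Defs
  imports Main
begin

text \<open>Partial functions from an index type 'e to a value type 'v are modelled as maps
  'e \<rightharpoonup> 'v; the order "extension by restriction" is map_le.\<close>

definition compatible :: "('e \<rightharpoonup> 'v) set \<Rightarrow> bool" where
  "compatible F \<longleftrightarrow> (\<forall>f\<in>F. \<forall>g\<in>F. \<forall>x\<in>dom f \<inter> dom g. f x = g x)"

definition join :: "('e \<rightharpoonup> 'v) set \<Rightarrow> ('e \<rightharpoonup> 'v)" where
  "join F = (\<lambda>x. if \<exists>f\<in>F. x \<in> dom f then (SOME f. f \<in> F \<and> x \<in> dom f) x else None)"

definition vee_prime :: "('e \<rightharpoonup> 'v) set \<Rightarrow> bool" where
  "vee_prime \<Theta> \<longleftrightarrow> (\<forall>F. F \<subseteq> \<Theta> \<and> compatible F \<and> join F \<in> \<Theta> \<longrightarrow> join F \<in> F)"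

definition space_of_input_histories :: "('e \<rightharpoonup> 'v) set \<Rightarrow> bool" where
  "space_of_input_histories \<Theta> \<longleftrightarrow> finite \<Theta> \<and> vee_prime \<Theta>"

definition events :: "('e \<rightharpoonup> 'v) set \<Rightarrow> 'e set" where
  "events \<Theta> = (\<Union>h\<in>\<Theta>. dom h)"

definition inputs :: "('e \<rightharpoonup> 'v) set \<Rightarrow> 'e \<Rightarrow> 'v set" where
  "inputs \<Theta> \<omega> = {v. \<exists>h\<in>\<Theta>. \<omega> \<in> dom h \<and> h \<omega> = Some v}"

definition Ext :: "('e \<rightharpoonup> 'v) set \<Rightarrow> ('e \<rightharpoonup> 'v) set" where
  "Ext \<Theta> = {join F | F. F \<noteq> {} \<and> F \<subseteq> \<Theta> \<and> compatible F}"

definition free_choice :: "('e \<rightharpoonup> 'v) set \<Rightarrow> bool" where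
  "free_choice \<Theta> \<longleftrightarrow>
     {k. k \<in> Ext \<Theta> \<and> (\<forall>k'\<in>Ext \<Theta>. k \<subseteq>\<^sub>m k' \<longrightarrow> k' = k)}
     = {k. dom k = events \<Theta> \<and> (\<forall>\<omega>\<in>events \<Theta>. the (k \<omega>) \<in> inputs \<Theta> \<omega>)}"

definition tips :: "('e \<rightharpoonup> 'v) set \<Rightarrow> ('e \<rightharpoonup> 'v) \<Rightarrow> 'e set" where
  "tips \<Theta> h = dom h - (\<Union>{dom k | k. k \<in> Ext \<Theta> \<and> k \<subseteq>\<^sub>m h \<and> k \<noteq> h})"

definition causally_complete :: "('e \<rightharpoonup> 'v) set \<Rightarrow> bool" where
  "causally_complete \<Theta> \<longleftrightarrow> free_choice \<Theta> \<and> (\<forall>h\<in>\<Theta>. card (tips \<Theta> h) = 1)"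

definition space_le :: "('e \<rightharpoonup> 'v) set \<Rightarrow> ('e \<rightharpoonup> 'v) set \<Rightarrow> bool" where
  "space_le \<Theta>1 \<Theta>2 \<longleftrightarrow> Ext \<Theta>2 \<subseteq> Ext \<Theta>1"

definition causal_completions :: "('e \<rightharpoonup> 'v) set \<Rightarrow> ('e \<rightharpoonup> 'v) set set" where
  "causal_completions \<Theta> =
     {\<Theta>1. space_of_input_histories \<Theta>1 \<and> space_le \<Theta>1 \<Theta> \<and> causally_complete \<Theta>1 \<and>
        (\<forall>\<Theta>2. space_of_input_histories \<Theta>2 \<and> space_le \<Theta>2 \<Theta> \<and> causally_complete \<Theta>2 \<and>
               space_le \<Theta>1 \<Theta>2 \<longrightarrow> space_le \<Theta>2 \<Theta>1)}"

end

theory Submission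
  imports Defs
begin

lemma join_eq:
  assumes "compatible F" "f \<in> F" "f x = Some v"
  shows "join F x = Some v"
proof -
  have ex: "\<exists>f\<in>F. x \<in> dom f" using assms by blast
  let ?g = "SOME f. f \<in> F \<and> x \<in> dom f"
  have g: "?g \<in> F \<and> x \<in> dom ?g" using someI_ex[of "\<lambda>f. f \<in> F \<and> x \<in> dom f"] ex by blast
  have "?g x = f x" using assms(1) g assms(2,3) unfolding compatible_def by blast
  then show ?thesis using ex assms(3) unfolding join_def by simp
qed

lemma join_le: "compatible F \<Longrightarrow> f \<in> F \<Longrightarrow> f \<subseteq>\<^sub>m join F"
  unfolding map_le_def using join_eq by fastforce

lemma join_Some: assumes "join F x = Some v" shows "\<exists>f\<in>F. f x = Some v"
proof -
  have ex: "\<exists>f\<in>F. x \<in> dom f" using assms unfolding join_def by (auto split: if_splits)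
  let ?g = "SOME f. f \<in> F \<and> x \<in> dom f"
  have g: "?g \<in> F \<and> x \<in> dom ?g" using someI_ex[of "\<lambda>f. f \<in> F \<and> x \<in> dom f"] ex by blast
  have "join F x = ?g x" using ex unfolding join_def by simp
  then show ?thesis using g assms by auto
qed

lemma join_single: "join {h} = h"
proof
  fix x show "join {h} x = h x"
  proof (cases "h x")
    case None then show ?thesis unfolding join_def by auto
  next
    case (Some v) then show ?thesis using join_eq[of "{h}" h x v] by (simp add: compatible_def)
  qed
qed

lemma sub_Ext: "\<Theta> \<subseteq> Ext \<Theta>"
proof
  fix h assume h: "h \<in> \<Theta>"
  have c: "compatible {h}" unfolding compatible_def by simp
  have "h = join {h}" by (simp only: join_single)
  then show "h \<in> Ext \<Theta>" unfolding Ext_def using h c by blast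
qed

lemma Ext_Some: assumes "h \<in> Ext T" "h x = Some v" shows "\<exists>f\<in>T. f x = Some v"
proof -
  obtain F where F: "h = join F" "F \<subseteq> T" using assms(1) unfolding Ext_def by blast
  then obtain f where "f \<in> F" "f x = Some v" using join_Some assms(2) by metis
  then show ?thesis using F by blast
qed

lemma inputs_iff: "v \<in> inputs T x \<longleftrightarrow> (\<exists>h\<in>T. h x = Some v)"
  unfolding inputs_def by auto

lemma events_iff: "x \<in> events T \<longleftrightarrow> (\<exists>h\<in>T. \<exists>v. h x = Some v)"
  unfolding events_def by auto

definition good :: "('e \<rightharpoonup> 'v) set \<Rightarrow> ('e \<rightharpoonup> 'v) \<Rightarrow> bool" where
  "good T h \<longleftrightarrow> (\<forall>x v. h x = Some v \<longrightarrow> v \<in> inputs T x)"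

lemma good_events: "good T h \<Longrightarrow> x \<in> dom h \<Longrightarrow> x \<in> events T"
  unfolding good_def inputs_def events_def by fastforce

lemma good_events2: "good T h \<Longrightarrow> h x = Some v \<Longrightarrow> x \<in> events T"
  using good_events by (metis domI)

lemma map_le_dom_eq: assumes "k \<subseteq>\<^sub>m k'" "dom k' \<subseteq> dom k" shows "k' = k"
proof -
  have "k' \<subseteq>\<^sub>m k" unfolding map_le_def
  proof (intro ballI)
    fix x assume "x \<in> dom k'"
    then have "x \<in> dom k" using assms(2) by blast
    then show "k' x = k x" using assms(1) unfolding map_le_def by simp
  qed
  then show ?thesis using assms(1) by (rule map_le_antisym)
qed

lemma good_le: assumes "good T h" "k \<subseteq>\<^sub>m h" shows "good T k"
  unfolding good_def
proof (intro allI impI)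
  fix x v assume "k x = Some v"
  then have "h x = Some v" using assms(2) unfolding map_le_def by (metis domI)
  then show "v \<in> inputs T x" using assms(1) unfolding good_def by blast
qed

lemma good_Ext: assumes "k \<in> Ext S" "\<forall>f\<in>S. good T f" shows "good T k"
  unfolding good_def
proof (intro allI impI)
  fix x v assume "k x = Some v"
  then obtain f where "f \<in> S" "f x = Some v" using Ext_Some assms(1) by metis
  then show "v \<in> inputs T x" using assms(2) unfolding good_def by blast
qed

lemma good_mem: assumes "h \<in> T" shows "good T h"
  unfolding good_def
proof (intro allI impI)
  fix x v assume hx: "h x = Some v"
  then have "x \<in> dom h" by (simp add: domI)
  then show "v \<in> inputs T x" unfolding inputs_def using hx assms by (intro CollectI bexI[of _ h]) simp_all
qed

lemma Ext_good_restrict: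
  assumes "k \<in> Ext S" "good T k"
  shows "k \<in> Ext {h\<in>S. good T h}"
proof -
  obtain F where F: "k = join F" "F \<noteq> {}" "F \<subseteq> S" "compatible F" using assms(1) unfolding Ext_def by blast
  have "F \<subseteq> {h\<in>S. good T h}"
  proof
    fix f assume f: "f \<in> F"
    have "f \<subseteq>\<^sub>m k" using join_le[OF F(4) f] F(1) by simp
    then have "good T f" using good_le assms(2) by blast
    then show "f \<in> {h\<in>S. good T h}" using f F(3) by blast
  qed
  then show ?thesis using F unfolding Ext_def by blast
qed

lemma Ext_mono: "A \<subseteq> B \<Longrightarrow> Ext A \<subseteq> Ext B"
  unfolding Ext_def by blast

theorem proposition19:
  fixes \<Theta> \<Theta>h :: "('e \<rightharpoonup> 'v) set"
  assumes "space_of_input_histories \<Theta>"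
    and "free_choice \<Theta>"
    and "\<Theta>h \<in> causal_completions \<Theta>"
  shows "events \<Theta>h = events \<Theta> \<and> (\<forall>\<omega>\<in>events \<Theta>. inputs \<Theta>h \<omega> = inputs \<Theta> \<omega>)"
proof -
  define T2 where "T2 = {h\<in>\<Theta>h. good \<Theta> h}"
  have sp: "space_of_input_histories \<Theta>h" and le: "Ext \<Theta> \<subseteq> Ext \<Theta>h"
    and cc: "causally_complete \<Theta>h"
    and mx: "\<And>\<Theta>2. space_of_input_histories \<Theta>2 \<Longrightarrow> space_le \<Theta>2 \<Theta> \<Longrightarrow> causally_complete \<Theta>2 \<Longrightarrow>
               space_le \<Theta>h \<Theta>2 \<Longrightarrow> space_le \<Theta>2 \<Theta>h"
    using assms(3) unfolding causal_completions_def space_le_def by auto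
  have E2sub: "Ext T2 \<subseteq> Ext \<Theta>h" unfolding T2_def by (rule Ext_mono) blast
  have goodT2: "\<forall>f\<in>T2. good \<Theta> f" unfolding T2_def by blast
  have ExtTh_T2: "Ext \<Theta> \<subseteq> Ext T2"
  proof (rule subsetI)
    fix k assume k: "k \<in> Ext \<Theta>"
    have gm: "\<forall>f\<in>\<Theta>. good \<Theta> f" using good_mem by blast
    have gk: "good \<Theta> k" by (rule good_Ext[OF k gm])
    have "k \<in> Ext \<Theta>h" using k le by (rule subsetD[rotated])
    then show "k \<in> Ext T2" unfolding T2_def by (rule Ext_good_restrict[OF _ gk])
  qed
  have ThExt: "\<Theta> \<subseteq> Ext T2" using sub_Ext ExtTh_T2 by blast
  have ev2: "events T2 = events \<Theta>"
  proof (rule equalityI)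
    show "events T2 \<subseteq> events \<Theta>"
    proof (rule subsetI)
      fix x assume "x \<in> events T2"
      then obtain h v where h: "h \<in> T2" "h x = Some v" unfolding events_iff by blast
      have "good \<Theta> h" using goodT2 h(1) by (rule bspec)
      then show "x \<in> events \<Theta>" using h(2) by (rule good_events2)
    qed
    show "events \<Theta> \<subseteq> events T2"
    proof (rule subsetI)
      fix x assume "x \<in> events \<Theta>"
      then obtain h v where hh: "h \<in> \<Theta>" "h x = Some v" unfolding events_iff by blast
      then obtain f where "f \<in> T2" "f x = Some v" using Ext_Some[OF subsetD[OF ThExt hh(1)] hh(2)] by blast
      then show "x \<in> events T2" unfolding events_iff by blast
    qed
  qed
  have in2: "inputs T2 x = inputs \<Theta> x" for x
  proof (rule equalityI)
    show "inputs T2 x \<subseteq> inputs \<Theta> x"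
    proof (rule subsetI)
      fix v assume "v \<in> inputs T2 x"
      then obtain h where h: "h \<in> T2" "h x = Some v" unfolding inputs_iff by blast
      have "good \<Theta> h" using goodT2 h(1) by (rule bspec)
      then show "v \<in> inputs \<Theta> x" using h(2) unfolding good_def by simp
    qed
    show "inputs \<Theta> x \<subseteq> inputs T2 x"
    proof (rule subsetI)
      fix v assume "v \<in> inputs \<Theta> x"
      then obtain h where hh: "h \<in> \<Theta>" "h x = Some v" unfolding inputs_iff by blast
      then obtain f where "f \<in> T2" "f x = Some v" using Ext_Some[OF subsetD[OF ThExt hh(1)] hh(2)] by blast
      then show "v \<in> inputs T2 x" unfolding inputs_iff by blast
    qed
  qed
  have sp2: "space_of_input_histories T2"
    using sp unfolding space_of_input_histories_def vee_prime_def T2_def by auto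
  have fc: "free_choice T2"
  proof -
    have fcT: "{k. k \<in> Ext \<Theta> \<and> (\<forall>k'\<in>Ext \<Theta>. k \<subseteq>\<^sub>m k' \<longrightarrow> k' = k)}
     = {k. dom k = events \<Theta> \<and> (\<forall>\<omega>\<in>events \<Theta>. the (k \<omega>) \<in> inputs \<Theta> \<omega>)}"
      using assms(2) unfolding free_choice_def by blast
    show ?thesis unfolding free_choice_def ev2 in2
    proof (intro equalityI subsetI)
      fix k assume "k \<in> {k. k \<in> Ext T2 \<and> (\<forall>k'\<in>Ext T2. k \<subseteq>\<^sub>m k' \<longrightarrow> k' = k)}"
      then have k: "k \<in> Ext T2" and km: "\<forall>k'\<in>Ext T2. k \<subseteq>\<^sub>m k' \<longrightarrow> k' = k" by auto
      have gk: "good \<Theta> k" using good_Ext[OF k goodT2] .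
      define t where "t = (\<lambda>x. if x \<in> dom k then k x else if x \<in> events \<Theta> then Some (SOME v. v \<in> inputs \<Theta> x) else None)"
      have ne: "x \<in> events \<Theta> \<Longrightarrow> \<exists>v. v \<in> inputs \<Theta> x" for x
        unfolding events_iff inputs_iff by blast
      have dt: "dom t = events \<Theta>" using good_events[OF gk] unfolding t_def by (auto split: if_splits)
      have vt: "\<forall>\<omega>\<in>events \<Theta>. the (t \<omega>) \<in> inputs \<Theta> \<omega>"
      proof (rule ballI)
        fix w assume w: "w \<in> events \<Theta>"
        show "the (t w) \<in> inputs \<Theta> w"
        proof (cases "w \<in> dom k")
          case True then obtain v where "k w = Some v" by blast
          then show ?thesis using gk True unfolding good_def t_def by auto
        next
          case False then show ?thesis using w ne[OF w] unfolding t_def by (auto intro: someI_ex)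
        qed
      qed
      have "t \<in> Ext \<Theta>" using fcT dt vt by blast
      then have "t \<in> Ext T2" using ExtTh_T2 by blast
      moreover have "k \<subseteq>\<^sub>m t" unfolding t_def map_le_def by auto
      ultimately have "t = k" using km by blast
      then show "k \<in> {k. dom k = events \<Theta> \<and> (\<forall>\<omega>\<in>events \<Theta>. the (k \<omega>) \<in> inputs \<Theta> \<omega>)}"
        using dt vt by blast
    next
      fix k assume "k \<in> {k. dom k = events \<Theta> \<and> (\<forall>\<omega>\<in>events \<Theta>. the (k \<omega>) \<in> inputs \<Theta> \<omega>)}"
      then have k: "k \<in> Ext \<Theta>" and dk: "dom k = events \<Theta>" using fcT by auto
      have "k \<in> Ext T2" using ExtTh_T2 k by (rule subsetD)
      moreover have "k' = k" if "k' \<in> Ext T2" "k \<subseteq>\<^sub>m k'" for k'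
      proof -
        have "good \<Theta> k'" using good_Ext[OF that(1) goodT2] .
        then have "dom k' \<subseteq> dom k" using good_events[OF \<open>good \<Theta> k'\<close>] dk by auto
        then show ?thesis using that(2) map_le_dom_eq by blast
      qed
      ultimately show "k \<in> {k. k \<in> Ext T2 \<and> (\<forall>k'\<in>Ext T2. k \<subseteq>\<^sub>m k' \<longrightarrow> k' = k)}" by blast
    qed
  qed
  have tipsEq: "tips T2 h = tips \<Theta>h h" if h: "h \<in> T2" for h
  proof -
    have gh: "good \<Theta> h" using h goodT2 by blast
    have "{dom k | k. k \<in> Ext T2 \<and> k \<subseteq>\<^sub>m h \<and> k \<noteq> h} = {dom k | k. k \<in> Ext \<Theta>h \<and> k \<subseteq>\<^sub>m h \<and> k \<noteq> h}"
    proof (intro equalityI subsetI)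
      fix X assume "X \<in> {dom k | k. k \<in> Ext T2 \<and> k \<subseteq>\<^sub>m h \<and> k \<noteq> h}"
      then show "X \<in> {dom k | k. k \<in> Ext \<Theta>h \<and> k \<subseteq>\<^sub>m h \<and> k \<noteq> h}" using E2sub by blast
    next
      fix X assume "X \<in> {dom k | k. k \<in> Ext \<Theta>h \<and> k \<subseteq>\<^sub>m h \<and> k \<noteq> h}"
      then obtain k where "X = dom k" "k \<in> Ext \<Theta>h" "k \<subseteq>\<^sub>m h" "k \<noteq> h" by blast
      moreover have "k \<in> Ext T2" unfolding T2_def
        using Ext_good_restrict calculation good_le[OF gh] by blast
      ultimately show "X \<in> {dom k | k. k \<in> Ext T2 \<and> k \<subseteq>\<^sub>m h \<and> k \<noteq> h}" by blast
    qed
    then show ?thesis unfolding tips_def by simp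
  qed
  have cc2: "causally_complete T2"
    using fc cc tipsEq unfolding causally_complete_def T2_def by auto
  have "space_le T2 \<Theta>h" using mx[OF sp2 _ cc2] ExtTh_T2 E2sub unfolding space_le_def by blast
  then have "Ext \<Theta>h \<subseteq> Ext T2" unfolding space_le_def .
  then have allgood: "\<forall>h\<in>\<Theta>h. good \<Theta> h" using sub_Ext good_Ext goodT2 by blast
  have ThExth: "\<Theta> \<subseteq> Ext \<Theta>h" using sub_Ext le by blast
  have "events \<Theta>h = events \<Theta>"
  proof (rule equalityI)
    show "events \<Theta>h \<subseteq> events \<Theta>"
    proof (rule subsetI)
      fix x assume "x \<in> events \<Theta>h"
      then obtain h v where h: "h \<in> \<Theta>h" "h x = Some v" unfolding events_iff by blast
      have "good \<Theta> h" using allgood h(1) by (rule bspec)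
      then show "x \<in> events \<Theta>" using h(2) by (rule good_events2)
    qed
    show "events \<Theta> \<subseteq> events \<Theta>h"
    proof (rule subsetI)
      fix x assume "x \<in> events \<Theta>"
      then obtain h v where hh: "h \<in> \<Theta>" "h x = Some v" unfolding events_iff by blast
      then obtain f where "f \<in> \<Theta>h" "f x = Some v" using Ext_Some[OF subsetD[OF ThExth hh(1)] hh(2)] by blast
      then show "x \<in> events \<Theta>h" unfolding events_iff by blast
    qed
  qed
  moreover have "inputs \<Theta>h x = inputs \<Theta> x" for x
  proof (rule equalityI)
    show "inputs \<Theta>h x \<subseteq> inputs \<Theta> x"
    proof (rule subsetI)
      fix v assume "v \<in> inputs \<Theta>h x"
      then obtain h where h: "h \<in> \<Theta>h" "h x = Some v" unfolding inputs_iff by blast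
      have "good \<Theta> h" using allgood h(1) by (rule bspec)
      then show "v \<in> inputs \<Theta> x" using h(2) unfolding good_def by simp
    qed
    show "inputs \<Theta> x \<subseteq> inputs \<Theta>h x"
    proof (rule subsetI)
      fix v assume "v \<in> inputs \<Theta> x"
      then obtain h where hh: "h \<in> \<Theta>" "h x = Some v" unfolding inputs_iff by blast
      then obtain f where "f \<in> \<Theta>h" "f x = Some v" using Ext_Some[OF subsetD[OF ThExth hh(1)] hh(2)] by blast
      then show "v \<in> inputs \<Theta>h x" unfolding inputs_iff by blast
    qed
  qed
  ultimately show ?thesis by blast
qed

end
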